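(* Let $\mathcal{S}=(X,\xrightarrow{\Sigma},\le)$ be a very-WSTS and $I_0\in\mathrm{Idl}(X)$, and let $c,d$ be nodes of $\mathcal{T}_{I_0}$. (1) If $d$ is reachable from $c$ along arcs of $\mathcal{T}_{I_0}$ (i.e. $d$ is a descendant of $c$ or $c$ itself) and $\mathrm{ideal}(c)=\mathrm{ideal}(d)$, then $\mathrm{numaccel}(c)=\mathrm{numaccel}(d)$. (2) If $d$ is reachable from $c$ in the stuttering automaton $\mathcal{A}_{I_0}$, then $\mathrm{numaccel}(c)\le\mathrm{numaccel}(d)$.
   Context: A (labeled, ordered) transition system is $\mathcal{S}=(X,\xrightarrow{\Sigma},\le)$: $X$ a set, $\Sigma$ a finite alphabet, $\xrightarrow{a}\subseteq X\times X$, $\le$ a quasi-ordering; relations extend to words. $\mathrm{Post}(x,a)=\{y:x\xrightarrow{a}y\}$, extended to sets by union; $\downarrow D=\{x:\exists y\in D,\,x\le y\}$. WSTS: $\le$ a wqo and $x\xrightarrow{a}y$, $x'\ge x$ imply $x'\xrightarrow{w}y'\ge y$ for some $w$. Strong monotonicity: $x\xrightarrow{a}y$, $x'\ge x$ imply $x'\xrightarrow{a}y'$ with $y'\ge y$; strong-strict: additionally $x'>x$ gives $y'>y$. Deterministic: at most one $a$-successor. Ideals: nonempty downward-closed directed subsets, set $\mathrm{Idl}(X)$. Completion $\widehat{\mathcal{S}}=(\mathrm{Idl}(X),\Rightarrow_\Sigma,\subseteq)$ with $I\xRightarrow{a}J$ iff $J$ is a $\subseteq$-maximal ideal included in $\downarrow\mathrm{Post}(I,a)$;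 if deterministic, $w(I)$ is the unique $J$ with $I\xRightarrow{w}J$, when defined. $w^\infty(I)=\bigcup_kw^k(I)$ if $I\subset w(I)$, else $I$ ($w\in\Sigma^+$). Levels: $\mathrm{Idl}_0(X)=\mathrm{Idl}(X)$, $\mathrm{Idl}_n(X)$ = unions of strictly increasing sequences in $\mathrm{Idl}_{n-1}(X)$; finitely many levels if some $\mathrm{Idl}_n(X)=\emptyset$. Very-WSTS: WSTS with strong monotonicity whose completion is a deterministic WSTS ($\subseteq$ a wqo on ideals) with strong-strict monotonicity, and $\mathrm{Idl}(X)$ has finitely many levels. Ideal Karp-Miller algorithm on input $(\mathcal{S},I_0)$ (terminates for very-WSTS): builds a tree with node labels $(\mathrm{ideal}(c),\mathrm{numaccel}(c))\in\mathrm{Idl}(X)\times\mathbb{N}$ and letter-labeled arcs, starting with root $(I_0,0)$. While a node $c:(I,n)$ is unmarked: if a proper ancestor has ideal $I$, mark $c$; otherwise, if a proper ancestor $c'$ has $\mathrm{ideal}(c')\subset I$ and $\mathrm{numaccel}(c')=n$, relabel $c$ by $(w^\infty(I),n+1)$ with $w$ the arc-label word from $c'$ to $c$; then, with $(I,n)$ the current label, add for each $a\in\Sigma$ with $a(I)$ defined a child $(a(I),n)$ via an $a$-arc; mark $c$. $\mathcal{T}_{I_0}$ is the returned tree. The stuttering automaton $\mathcal{A}_{I_0}$ has the nodes of $\mathcal{T}_{I_0}$ as states, the arcs of $\mathcal{T}_{I_0}$ as transitions, plus an $\varepsilon$-transition from each leaf $c$ to any ancestor $c'$ with $\mathrm{ideal}(c')=\mathrm{ideal}(c)$.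 *)

theory Defs
  imports Main "HOL-Library.Sublist"
begin

fun gsteps :: "('a \<Rightarrow> 's \<Rightarrow> 's \<Rightarrow> bool) \<Rightarrow> 'a list \<Rightarrow> 's \<Rightarrow> 's \<Rightarrow> bool" where
  "gsteps step [] x y = (x = y)"
| "gsteps step (a # w) x y = (\<exists>z. step a x z \<and> gsteps step w z y)"

definition qo_on_rel :: "'s set \<Rightarrow> ('s \<Rightarrow> 's \<Rightarrow> bool) \<Rightarrow> bool" where
  "qo_on_rel S le \<longleftrightarrow> (\<forall>x\<in>S. le x x) \<and>
     (\<forall>x\<in>S. \<forall>y\<in>S. \<forall>z\<in>S. le x y \<longrightarrow> le y z \<longrightarrow> le x z)"

definition wqo_on_rel :: "'s set \<Rightarrow> ('s \<Rightarrow> 's \<Rightarrow> bool) \<Rightarrow> bool" where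
  "wqo_on_rel S le \<longleftrightarrow> qo_on_rel S le \<and>
     (\<forall>f :: nat \<Rightarrow> 's. (\<forall>i. f i \<in> S) \<longrightarrow> (\<exists>i j. i < j \<and> le (f i) (f j)))"

definition closed_ts :: "'s set \<Rightarrow> ('a \<Rightarrow> 's \<Rightarrow> 's \<Rightarrow> bool) \<Rightarrow> bool" where
  "closed_ts S step \<longleftrightarrow> (\<forall>a x y. x \<in> S \<longrightarrow> step a x y \<longrightarrow> y \<in> S)"

definition wsts :: "'s set \<Rightarrow> ('a \<Rightarrow> 's \<Rightarrow> 's \<Rightarrow> bool) \<Rightarrow> ('s \<Rightarrow> 's \<Rightarrow> bool) \<Rightarrow> bool" where
  "wsts S step le \<longleftrightarrow> closed_ts S step \<and> wqo_on_rel S le \<and>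
     (\<forall>a x y x'. x \<in> S \<longrightarrow> x' \<in> S \<longrightarrow> step a x y \<longrightarrow> le x x' \<longrightarrow>
        (\<exists>w y'. gsteps step w x' y' \<and> le y y'))"

definition strong_mono :: "'s set \<Rightarrow> ('a \<Rightarrow> 's \<Rightarrow> 's \<Rightarrow> bool) \<Rightarrow> ('s \<Rightarrow> 's \<Rightarrow> bool) \<Rightarrow> bool" where
  "strong_mono S step le \<longleftrightarrow>
     (\<forall>a x y x'. x \<in> S \<longrightarrow> x' \<in> S \<longrightarrow> step a x y \<longrightarrow> le x x' \<longrightarrow>
        (\<exists>y'. step a x' y' \<and> le y y'))"

definition strict_of :: "('s \<Rightarrow> 's \<Rightarrow> bool) \<Rightarrow> 's \<Rightarrow> 's \<Rightarrow> bool" where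
  "strict_of le x y \<longleftrightarrow> le x y \<and> \<not> le y x"

definition strong_strict_mono :: "'s set \<Rightarrow> ('a \<Rightarrow> 's \<Rightarrow> 's \<Rightarrow> bool) \<Rightarrow> ('s \<Rightarrow> 's \<Rightarrow> bool) \<Rightarrow> bool" where
  "strong_strict_mono S step le \<longleftrightarrow>
     (\<forall>a x y x'. x \<in> S \<longrightarrow> x' \<in> S \<longrightarrow> step a x y \<longrightarrow> le x x' \<longrightarrow>
        (\<exists>y'. step a x' y' \<and> le y y' \<and> (strict_of le x x' \<longrightarrow> strict_of le y y')))"

definition deterministic :: "'s set \<Rightarrow> ('a \<Rightarrow> 's \<Rightarrow> 's \<Rightarrow> bool) \<Rightarrow> bool" where
  "deterministic S step \<longleftrightarrow>
     (\<forall>a x y y'. x \<in> S \<longrightarrow> step a x y \<longrightarrow> step a x y' \<longrightarrow> y = y')"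

definition Post :: "('a \<Rightarrow> 'x \<Rightarrow> 'x \<Rightarrow> bool) \<Rightarrow> 'x set \<Rightarrow> 'a \<Rightarrow> 'x set" where
  "Post step D a = {y. \<exists>x\<in>D. step a x y}"

definition down :: "('x \<Rightarrow> 'x \<Rightarrow> bool) \<Rightarrow> 'x set \<Rightarrow> 'x set" where
  "down le D = {x. \<exists>y\<in>D. le x y}"

definition is_ideal :: "('x \<Rightarrow> 'x \<Rightarrow> bool) \<Rightarrow> 'x set \<Rightarrow> bool" where
  "is_ideal le I \<longleftrightarrow> I \<noteq> {} \<and> (\<forall>x\<in>I. \<forall>y. le y x \<longrightarrow> y \<in> I) \<and>
     (\<forall>x\<in>I. \<forall>y\<in>I. \<exists>z\<in>I. le x z \<and> le y z)"

definition Idl :: "('x \<Rightarrow> 'x \<Rightarrow> bool) \<Rightarrow> 'x set set" where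
  "Idl le = {I. is_ideal le I}"

definition Cstep :: "('a \<Rightarrow> 'x \<Rightarrow> 'x \<Rightarrow> bool) \<Rightarrow> ('x \<Rightarrow> 'x \<Rightarrow> bool) \<Rightarrow> 'a \<Rightarrow> 'x set \<Rightarrow> 'x set \<Rightarrow> bool" where
  "Cstep step le a I J \<longleftrightarrow> J \<in> Idl le \<and> J \<subseteq> down le (Post step I a) \<and>
     (\<forall>K\<in>Idl le. J \<subseteq> K \<longrightarrow> K \<subseteq> down le (Post step I a) \<longrightarrow> K = J)"

definition capp :: "('a \<Rightarrow> 'x \<Rightarrow> 'x \<Rightarrow> bool) \<Rightarrow> ('x \<Rightarrow> 'x \<Rightarrow> bool) \<Rightarrow> 'a list \<Rightarrow> 'x set \<Rightarrow> 'x set option" where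
  "capp step le w I = (if \<exists>J. gsteps (Cstep step le) w I J
      then Some (THE J. gsteps (Cstep step le) w I J) else None)"

definition cinf :: "('a \<Rightarrow> 'x \<Rightarrow> 'x \<Rightarrow> bool) \<Rightarrow> ('x \<Rightarrow> 'x \<Rightarrow> bool) \<Rightarrow> 'a list \<Rightarrow> 'x set \<Rightarrow> 'x set" where
  "cinf step le w I = (if \<exists>J. capp step le w I = Some J \<and> I \<subset> J
      then \<Union>{J. \<exists>k. capp step le (concat (replicate k w)) I = Some J}
      else I)"

fun Idl_level :: "('x \<Rightarrow> 'x \<Rightarrow> bool) \<Rightarrow> nat \<Rightarrow> 'x set set" where
  "Idl_level le 0 = Idl le"
| "Idl_level le (Suc n) = {\<Union>(range f) | f. (\<forall>i. f i \<in> Idl_level le n) \<and> (\<forall>i. f i \<subset> f (Suc i))}"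

definition very_wsts :: "('a \<Rightarrow> 'x \<Rightarrow> 'x \<Rightarrow> bool) \<Rightarrow> ('x \<Rightarrow> 'x \<Rightarrow> bool) \<Rightarrow> bool" where
  "very_wsts step le \<longleftrightarrow>
     wsts UNIV step le \<and> strong_mono UNIV step le \<and>
     wsts (Idl le) (Cstep step le) (\<subseteq>) \<and> deterministic (Idl le) (Cstep step le) \<and>
     strong_strict_mono (Idl le) (Cstep step le) (\<subseteq>) \<and>
     (\<exists>n. Idl_level le n = {})"

text \<open>Nodes are words (the arc labels from the root), N is the node set and L the final
  labelling (ideal, numaccel). km_init gives the label a node receives upon creation.\<close>
definition km_init :: "('a \<Rightarrow> 'x \<Rightarrow> 'x \<Rightarrow> bool) \<Rightarrow> ('x \<Rightarrow> 'x \<Rightarrow> bool) \<Rightarrow> 'x set \<Rightarrow>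
    ('a list \<Rightarrow> 'x set \<times> nat) \<Rightarrow> 'a list \<Rightarrow> 'x set \<times> nat" where
  "km_init step le I0 L c = (if c = [] then (I0, 0)
     else (the (capp step le [last c] (fst (L (butlast c)))), snd (L (butlast c))))"

definition km_marked_leaf :: "('a \<Rightarrow> 'x \<Rightarrow> 'x \<Rightarrow> bool) \<Rightarrow> ('x \<Rightarrow> 'x \<Rightarrow> bool) \<Rightarrow> 'x set \<Rightarrow>
    ('a list \<Rightarrow> 'x set \<times> nat) \<Rightarrow> 'a list \<Rightarrow> bool" where
  "km_marked_leaf step le I0 L c \<longleftrightarrow>
     (\<exists>c'. strict_prefix c' c \<and> fst (L c') = fst (km_init step le I0 L c))"

definition km_accel_cand :: "('a \<Rightarrow> 'x \<Rightarrow> 'x \<Rightarrow> bool) \<Rightarrow> ('x \<Rightarrow> 'x \<Rightarrow> bool) \<Rightarrow> 'x set \<Rightarrow>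
    ('a list \<Rightarrow> 'x set \<times> nat) \<Rightarrow> 'a list \<Rightarrow> 'a list \<Rightarrow> bool" where
  "km_accel_cand step le I0 L c c' \<longleftrightarrow> strict_prefix c' c \<and>
     fst (L c') \<subset> fst (km_init step le I0 L c) \<and> snd (L c') = snd (km_init step le I0 L c)"

text \<open>(N, L) is a tree returnable by the Ideal Karp-Miller algorithm on input (S, I0)
  (for some resolution of the nondeterministic choice of the ancestor c').\<close>
definition km_tree :: "('a \<Rightarrow> 'x \<Rightarrow> 'x \<Rightarrow> bool) \<Rightarrow> ('x \<Rightarrow> 'x \<Rightarrow> bool) \<Rightarrow> 'x set \<Rightarrow>
    'a list set \<Rightarrow> ('a list \<Rightarrow> 'x set \<times> nat) \<Rightarrow> bool" where
  "km_tree step le I0 N L \<longleftrightarrow>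
     finite N \<and> [] \<in> N \<and>
     (\<forall>c a. c @ [a] \<in> N \<longrightarrow> c \<in> N) \<and>
     (\<forall>c\<in>N. \<forall>a. c @ [a] \<in> N \<longleftrightarrow>
        \<not> km_marked_leaf step le I0 L c \<and> capp step le [a] (fst (L c)) \<noteq> None) \<and>
     (\<forall>c\<in>N.
        if km_marked_leaf step le I0 L c then L c = km_init step le I0 L c
        else if (\<exists>c'. km_accel_cand step le I0 L c c') then
          (\<exists>c'. km_accel_cand step le I0 L c c' \<and>
             L c = (cinf step le (drop (length c') c) (fst (km_init step le I0 L c)),
                    snd (km_init step le I0 L c) + 1))
        else L c = km_init step le I0 L c)"

definition km_leaf :: "'a list set \<Rightarrow> 'a list \<Rightarrow> bool" where
  "km_leaf N c \<longleftrightarrow> c \<in> N \<and> (\<forall>a. c @ [a] \<notin> N)"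

definition stut_edge :: "'a list set \<Rightarrow> ('a list \<Rightarrow> 'x set \<times> nat) \<Rightarrow> 'a list \<Rightarrow> 'a list \<Rightarrow> bool" where
  "stut_edge N L c d \<longleftrightarrow> c \<in> N \<and> d \<in> N \<and>
     ((\<exists>a. d = c @ [a]) \<or> (km_leaf N c \<and> prefix d c \<and> fst (L d) = fst (L c)))"

end

theory Submission
  imports Defs
begin

lemma gsteps_append: "gsteps s (u @ v) x y \<longleftrightarrow> (\<exists>z. gsteps s u x z \<and> gsteps s v z y)"
  by (induction u arbitrary: x) auto

lemma concat_replicate_Suc': "concat (replicate (Suc k) w) = concat (replicate k w) @ w"
  by (induction k) auto

context
  fixes step :: "'a \<Rightarrow> 'x \<Rightarrow> 'x \<Rightarrow> bool" and le :: "'x \<Rightarrow> 'x \<Rightarrow> bool"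
  assumes V: "very_wsts step le"
begin

lemma qo_le: "qo_on_rel UNIV le"
proof -
  have "wsts UNIV step le" using V unfolding very_wsts_def by simp
  then have "wqo_on_rel UNIV le" unfolding wsts_def by simp
  then show ?thesis unfolding wqo_on_rel_def by simp
qed

lemma refl_le: "le x x"
  using qo_le unfolding qo_on_rel_def by simp

lemma trans_le: "le x y \<Longrightarrow> le y z \<Longrightarrow> le x z"
  using qo_le unfolding qo_on_rel_def by blast

lemma detC: "I \<in> Idl le \<Longrightarrow> Cstep step le a I J \<Longrightarrow> Cstep step le a I J' \<Longrightarrow> J = J'"
  using V unfolding very_wsts_def deterministic_def by blast

lemma ssmC: "I \<in> Idl le \<Longrightarrow> I' \<in> Idl le \<Longrightarrow> Cstep step le a I J \<Longrightarrow> I \<subseteq> I' \<Longrightarrow>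
   \<exists>J'. Cstep step le a I' J' \<and> J \<subseteq> J' \<and> (I \<subset> I' \<longrightarrow> J \<subset> J')"
proof -
  assume a: "I \<in> Idl le" "I' \<in> Idl le" "Cstep step le a I J" "I \<subseteq> I'"
  have "strong_strict_mono (Idl le) (Cstep step le) (\<subseteq>)" using V unfolding very_wsts_def by blast
  then obtain J' where "Cstep step le a I' J'" "J \<subseteq> J'" "strict_of (\<subseteq>) I I' \<longrightarrow> strict_of (\<subseteq>) J J'"
    using a unfolding strong_strict_mono_def by blast
  then show ?thesis unfolding strict_of_def by blast
qed

lemma Cstep_Idl: "Cstep step le a I J \<Longrightarrow> J \<in> Idl le"
  unfolding Cstep_def by blast

lemma ideal_ne: "K \<in> Idl le \<Longrightarrow> K \<noteq> {}"
  unfolding Idl_def is_ideal_def by simp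

lemma ideal_down: "K \<in> Idl le \<Longrightarrow> x \<in> K \<Longrightarrow> le z x \<Longrightarrow> z \<in> K"
  unfolding Idl_def is_ideal_def by simp

lemma ideal_dir: "K \<in> Idl le \<Longrightarrow> x \<in> K \<Longrightarrow> x' \<in> K \<Longrightarrow> \<exists>z\<in>K. le x z \<and> le x' z"
  unfolding Idl_def is_ideal_def by simp

lemma IdlI: "K \<noteq> {} \<Longrightarrow> (\<And>x z. x \<in> K \<Longrightarrow> le z x \<Longrightarrow> z \<in> K) \<Longrightarrow>
   (\<And>x x'. x \<in> K \<Longrightarrow> x' \<in> K \<Longrightarrow> \<exists>z\<in>K. le x z \<and> le x' z) \<Longrightarrow> K \<in> Idl le"
  unfolding Idl_def is_ideal_def by simp

lemma down_single_ideal: "down le {y} \<in> Idl le"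
proof (rule IdlI)
  show "down le {y} \<noteq> {}" using refl_le unfolding down_def by auto
next
  fix x z assume "x \<in> down le {y}" "le z x"
  then show "z \<in> down le {y}" using trans_le unfolding down_def by auto
next
  fix x x' assume "x \<in> down le {y}" "x' \<in> down le {y}"
  moreover have "y \<in> down le {y}" using refl_le unfolding down_def by auto
  ultimately show "\<exists>z\<in>down le {y}. le x z \<and> le x' z" unfolding down_def by auto
qed

lemma chain_ideal:
  assumes ne: "C \<noteq> {}" and CI: "C \<subseteq> Idl le" and ch: "\<And>X Y. X \<in> C \<Longrightarrow> Y \<in> C \<Longrightarrow> X \<subseteq> Y \<or> Y \<subseteq> X"
  shows "\<Union>C \<in> Idl le"
proof (rule IdlI)
  obtain X where "X \<in> C" using ne by auto
  then show "\<Union>C \<noteq> {}" using CI ideal_ne by blast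
next
  fix x z assume "x \<in> \<Union>C" "le z x"
  then obtain X where "X \<in> C" "x \<in> X" by auto
  then show "z \<in> \<Union>C" using CI ideal_down \<open>le z x\<close> by blast
next
  fix x x' assume x: "x \<in> \<Union>C" and x': "x' \<in> \<Union>C"
  then obtain X X' where X: "X \<in> C" "x \<in> X" and X': "X' \<in> C" "x' \<in> X'" by blast
  have "X \<subseteq> X' \<or> X' \<subseteq> X" using ch X X' by blast
  then show "\<exists>z\<in>\<Union>C. le x z \<and> le x' z"
  proof
    assume "X \<subseteq> X'"
    then obtain z where "z \<in> X'" "le x z" "le x' z" using ideal_dir[of X' x x'] X X' CI by blast
    then show ?thesis using X' by blast
  next
    assume "X' \<subseteq> X"
    then obtain z where "z \<in> X" "le x z" "le x' z" using ideal_dir[of X x x'] X X' CI by blast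
    then show ?thesis using X by blast
  qed
qed

lemma Zex: assumes "y \<in> down le (Post step I a)"
  shows "\<exists>M. Cstep step le a I M \<and> y \<in> M"
proof -
  define D where "D = down le (Post step I a)"
  define A where "A = {K \<in> Idl le. down le {y} \<subseteq> K \<and> K \<subseteq> D}"
  have dy: "down le {y} \<subseteq> D"
  proof
    fix x assume "x \<in> down le {y}"
    then have "le x y" unfolding down_def by simp
    moreover obtain p where "p \<in> Post step I a" "le y p" using assms unfolding down_def by auto
    ultimately show "x \<in> D" unfolding D_def down_def using trans_le by blast
  qed
  have dyA: "down le {y} \<in> A" using dy down_single_ideal unfolding A_def by simp
  have "\<forall>C\<in>chains A. \<exists>U\<in>A. \<forall>X\<in>C. X \<subseteq> U"
  proof
    fix C assume C: "C \<in> chains A"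
    show "\<exists>U\<in>A. \<forall>X\<in>C. X \<subseteq> U"
    proof (cases "C = {}")
      case True
      then show ?thesis using dyA by blast
    next
      case False
      have CA: "C \<subseteq> A" and ch: "\<And>X Y. X\<in>C \<Longrightarrow> Y\<in>C \<Longrightarrow> X \<subseteq> Y \<or> Y \<subseteq> X"
        using C unfolding chains_def chain_subset_def by auto
      have "C \<subseteq> Idl le" using CA unfolding A_def by auto
      then have "\<Union>C \<in> Idl le" using chain_ideal[OF False _ ch] by blast
      moreover obtain X where "X \<in> C" using False by auto
      then have "down le {y} \<subseteq> \<Union>C" using CA unfolding A_def by auto
      moreover have "\<Union>C \<subseteq> D"
        using CA unfolding A_def by auto
      ultimately have "\<Union>C \<in> A" unfolding A_def by simp
      then show ?thesis by blast
    qed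
  qed
  from Zorn_Lemma2[OF this] obtain M where M: "M \<in> A" "\<forall>X\<in>A. M \<subseteq> X \<longrightarrow> X = M" by blast
  have "Cstep step le a I M"
    unfolding Cstep_def
  proof (intro conjI ballI impI)
    show "M \<in> Idl le" "M \<subseteq> down le (Post step I a)" using M(1) unfolding A_def D_def by auto
  next
    fix K assume K: "K \<in> Idl le" "M \<subseteq> K" "K \<subseteq> down le (Post step I a)"
    have "down le {y} \<subseteq> K" using M(1) K(2) unfolding A_def by auto
    then have "K \<in> A" using K unfolding A_def D_def by simp
    then show "K = M" using M(2) K(2) by blast
  qed
  moreover have "y \<in> down le {y}" using refl_le unfolding down_def by simp
  then have "y \<in> M" using M(1) unfolding A_def by auto
  ultimately show ?thesis by blast
qed

lemma DP: "I \<in> Idl le \<Longrightarrow> Cstep step le a I J \<Longrightarrow> y \<in> down le (Post step I a) \<Longrightarrow> y \<in> J"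
proof -
  assume a: "I \<in> Idl le" "Cstep step le a I J" "y \<in> down le (Post step I a)"
  then obtain M where "Cstep step le a I M" "y \<in> M" using Zex by blast
  then show ?thesis using detC[OF a(1,2)] by blast
qed


lemma gsteps_Idl: "I \<in> Idl le \<Longrightarrow> gsteps (Cstep step le) w I J \<Longrightarrow> J \<in> Idl le"
proof (induction w arbitrary: I)
  case Nil then show ?case by simp
next
  case (Cons a w)
  then obtain z where "Cstep step le a I z" "gsteps (Cstep step le) w z J" by auto
  then show ?case using Cons.IH Cstep_Idl by blast
qed

lemma gsteps_det: "I \<in> Idl le \<Longrightarrow> gsteps (Cstep step le) w I J \<Longrightarrow> gsteps (Cstep step le) w I J' \<Longrightarrow> J = J'"
proof (induction w arbitrary: I)
  case Nil
  then show ?case by simp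
next
  case (Cons a w)
  then obtain z z' where "Cstep step le a I z" "gsteps (Cstep step le) w z J"
    "Cstep step le a I z'" "gsteps (Cstep step le) w z' J'" by auto
  moreover have "z = z'" using detC Cons.prems calculation by blast
  ultimately show ?case using Cons.IH Cstep_Idl by blast
qed

lemma capp_eq: "I \<in> Idl le \<Longrightarrow> gsteps (Cstep step le) w I J \<Longrightarrow> capp step le w I = Some J"
proof -
  assume a: "I \<in> Idl le" "gsteps (Cstep step le) w I J"
  have "(THE J. gsteps (Cstep step le) w I J) = J"
    using a gsteps_det by (intro the_equality) blast+
  then show ?thesis unfolding capp_def using a(2) by auto
qed

lemma capp_Some: "I \<in> Idl le \<Longrightarrow> capp step le w I = Some J \<Longrightarrow> gsteps (Cstep step le) w I J"
proof -
  assume a: "I \<in> Idl le" "capp step le w I = Some J"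
  then obtain J0 where "gsteps (Cstep step le) w I J0" unfolding capp_def by (auto split: if_splits)
  then have "capp step le w I = Some J0" using capp_eq a(1) by blast
  then show ?thesis using a(2) \<open>gsteps (Cstep step le) w I J0\<close> by simp
qed

lemma gsteps_ssm: "I \<in> Idl le \<Longrightarrow> I' \<in> Idl le \<Longrightarrow> I \<subseteq> I' \<Longrightarrow> gsteps (Cstep step le) w I J \<Longrightarrow>
   \<exists>J'. gsteps (Cstep step le) w I' J' \<and> J \<subseteq> J' \<and> (I \<subset> I' \<longrightarrow> J \<subset> J')"
proof (induction w arbitrary: I I')
  case Nil
  then show ?case by simp
next
  case (Cons a w)
  then obtain z where z: "Cstep step le a I z" "gsteps (Cstep step le) w z J" by auto
  obtain z' where z': "Cstep step le a I' z'" "z \<subseteq> z'" "I \<subset> I' \<longrightarrow> z \<subset> z'"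
    using ssmC[OF Cons.prems(1,2) z(1) Cons.prems(3)] by blast
  obtain J' where "gsteps (Cstep step le) w z' J'" "J \<subseteq> J'" "z \<subset> z' \<longrightarrow> J \<subset> J'"
    using Cons.IH[OF Cstep_Idl[OF z(1)] Cstep_Idl[OF z'(1)] z'(2) z(2)] by blast
  then show ?case using z' by auto
qed

lemma level_antitone: "Idl_level le (Suc n) \<subseteq> Idl_level le n"
proof (induction n)
  case 0
  show ?case
  proof
    fix X assume "X \<in> Idl_level le (Suc 0)"
    then obtain f where f: "X = \<Union>(range f)" "\<forall>i. f i \<in> Idl le" "\<forall>i. f i \<subset> f (Suc i)" by auto
    have mono: "i \<le> j \<Longrightarrow> f i \<subseteq> f j" for i j
      using lift_Suc_mono_le[of f i j] f(3) by auto
    have "\<Union>(range f) \<in> Idl le"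
    proof (rule chain_ideal)
      show "range f \<noteq> {}" by simp
      show "range f \<subseteq> Idl le" using f(2) by auto
      fix A B assume "A \<in> range f" "B \<in> range f"
      then obtain i j where "A = f i" "B = f j" by auto
      then show "A \<subseteq> B \<or> B \<subseteq> A" using mono[of i j] mono[of j i] by (cases "i \<le> j") auto
    qed
    then show "X \<in> Idl_level le 0" using f(1) by simp
  qed
next
  case (Suc n)
  show ?case
  proof
    fix X assume "X \<in> Idl_level le (Suc (Suc n))"
    then obtain f where f: "X = \<Union>(range f)" "\<forall>i. f i \<in> Idl_level le (Suc n)" "\<forall>i. f i \<subset> f (Suc i)"
      by auto
    then have "\<forall>i. f i \<in> Idl_level le n" using Suc.IH by blast
    then show "X \<in> Idl_level le (Suc n)" using f(1,3) by auto
  qed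
qed

lemma level_mono: "n \<le> m \<Longrightarrow> Idl_level le m \<subseteq> Idl_level le n"
proof (induction m)
  case 0
  then show ?case by simp
next
  case (Suc m)
  then show ?case using level_antitone[of m] by (cases "n = Suc m") auto
qed

lemma level_Idl: "Idl_level le n \<subseteq> Idl le"
  using level_mono[of 0 n] by simp

lemma K1: "I \<in> Idl_level le n \<Longrightarrow> Cstep step le a I J \<Longrightarrow> J \<in> Idl_level le n"
proof (induction n arbitrary: I J)
  case 0
  then show ?case using Cstep_Idl by simp
next
  case (Suc n)
  from Suc.prems(1) obtain f where f: "I = \<Union>(range f)" "\<forall>i. f i \<in> Idl_level le n" "\<forall>i. f i \<subset> f (Suc i)"
    by auto
  have mono: "i \<le> j \<Longrightarrow> f i \<subseteq> f j" for i j
    using lift_Suc_mono_le[of f i j] f(3) by auto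
  have fI: "f i \<in> Idl le" for i using f(2) level_Idl by blast
  have II: "I \<in> Idl le" using Suc.prems(1) level_Idl by blast
  have JI: "J \<in> Idl le" using Cstep_Idl Suc.prems(2) by blast
  have Jsub: "J \<subseteq> down le (Post step I a)" using Suc.prems(2) unfolding Cstep_def by blast
  have dpmono: "down le (Post step (f i) a) \<subseteq> down le (Post step (f j) a)" if ij: "i \<le> j" for i j
  proof
    fix y assume "y \<in> down le (Post step (f i) a)"
    then obtain p x where "x \<in> f i" "step a x p" "le y p" unfolding down_def Post_def by blast
    moreover have "x \<in> f j" using mono[OF ij] calculation(1) by blast
    ultimately show "y \<in> down le (Post step (f j) a)" unfolding down_def Post_def by blast
  qed
  have inJ: "y \<in> J \<Longrightarrow> \<exists>k. y \<in> down le (Post step (f k) a)" for y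
  proof -
    assume "y \<in> J"
    then obtain p x where "x \<in> I" "step a x p" "le y p" using Jsub unfolding down_def Post_def by blast
    then obtain k where "x \<in> f k" using f(1) by auto
    then show ?thesis using \<open>step a x p\<close> \<open>le y p\<close> unfolding down_def Post_def by blast
  qed
  obtain y0 where "y0 \<in> J" using ideal_ne[OF JI] by blast
  then obtain k0 where k0: "y0 \<in> down le (Post step (f k0) a)" using inJ by blast
  have ex: "\<exists>M. Cstep step le a (f (k0 + i)) M" for i
    using Zex[of y0 "f (k0+i)" a] dpmono[of k0 "k0+i"] k0 by auto
  define g where "g i = (SOME M. Cstep step le a (f (k0 + i)) M)" for i
  have gC: "Cstep step le a (f (k0 + i)) (g i)" for i
    unfolding g_def using someI_ex[OF ex] by blast
  have gL: "g i \<in> Idl_level le n" for i using Suc.IH f(2) gC by blast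
  have gS: "g i \<subset> g (Suc i)" for i
  proof -
    have lt: "f (k0 + i) \<subset> f (k0 + Suc i)" using f(3) by simp
    then obtain J' where "Cstep step le a (f (k0 + Suc i)) J'" "g i \<subset> J'"
      using ssmC[OF fI[of "k0+i"] fI[of "k0 + Suc i"] gC[of i]] by blast
    moreover have "J' = g (Suc i)" using detC[OF fI calculation(1) gC[of "Suc i"]] .
    ultimately show ?thesis by simp
  qed
  have "J = \<Union>(range g)"
  proof
    show "J \<subseteq> \<Union>(range g)"
    proof
      fix y assume "y \<in> J"
      then obtain k where "y \<in> down le (Post step (f k) a)" using inJ by blast
      then have "y \<in> down le (Post step (f (k0 + k)) a)" using dpmono[of k "k0+k"] by auto
      then have "y \<in> g k" using DP[OF fI gC] by blast
      then show "y \<in> \<Union>(range g)" by blast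
    qed
  next
    show "\<Union>(range g) \<subseteq> J"
    proof
      fix y assume "y \<in> \<Union>(range g)"
      then obtain i where "y \<in> g i" by auto
      have "f (k0 + i) \<subseteq> I" using f(1) by auto
      then obtain J' where "Cstep step le a I J'" "g i \<subseteq> J'" using ssmC[OF fI[of "k0+i"] II gC[of i]] by blast
      moreover have "J' = J" using detC[OF II calculation(1) Suc.prems(2)] .
      ultimately show "y \<in> J" using \<open>y \<in> g i\<close> by blast
    qed
  qed
  then have "\<exists>f. J = \<Union>(range f) \<and> (\<forall>i. f i \<in> Idl_level le n) \<and> (\<forall>i. f i \<subset> f (Suc i))"
    using gL gS by blast
  then show ?case by simp
qed

lemma K1w: "I \<in> Idl_level le n \<Longrightarrow> gsteps (Cstep step le) w I J \<Longrightarrow> J \<in> Idl_level le n"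
proof (induction w arbitrary: I)
  case Nil then show ?case by simp
next
  case (Cons a w)
  then obtain z where "Cstep step le a I z" "gsteps (Cstep step le) w z J" by auto
  then show ?case using Cons.IH Cons.prems(1) K1 by blast
qed


lemma K2:
  assumes IL: "I \<in> Idl_level le n" and IB: "gsteps (Cstep step le) w I B" and lt: "I \<subset> B"
  shows "cinf step le w I \<in> Idl_level le (Suc n)"
proof -
  have II: "I \<in> Idl le" using IL level_Idl by blast
  define s where "s = rec_nat I (\<lambda>_ X. THE J. gsteps (Cstep step le) w X J)"
  have s0: "s 0 = I" unfolding s_def by simp
  have sS: "s (Suc k) = (THE J. gsteps (Cstep step le) w (s k) J)" for k unfolding s_def by simp
  have inv: "s k \<in> Idl_level le n \<and> gsteps (Cstep step le) w (s k) (s (Suc k)) \<and> s k \<subset> s (Suc k)" for k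
  proof (induction k)
    case 0
    have "(THE J. gsteps (Cstep step le) w I J) = B"
      using IB gsteps_det[OF II] by (intro the_equality) blast+
    then show ?case using s0 sS[of 0] IL IB lt by simp
  next
    case (Suc k)
    then have a: "s k \<in> Idl_level le n" "gsteps (Cstep step le) w (s k) (s (Suc k))" "s k \<subset> s (Suc k)"
      by auto
    have L1: "s (Suc k) \<in> Idl_level le n" using K1w a(1,2) by blast
    have I1: "s k \<in> Idl le" "s (Suc k) \<in> Idl le" using a(1) L1 level_Idl by auto
    obtain J' where J': "gsteps (Cstep step le) w (s (Suc k)) J'" "s (Suc k) \<subset> J'"
      using gsteps_ssm[OF I1 _ a(2)] a(3) by blast
    have "(THE J. gsteps (Cstep step le) w (s (Suc k)) J) = J'"
      using J'(1) gsteps_det[OF I1(2)] by (intro the_equality) blast+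
    then show ?case using L1 J' sS[of "Suc k"] by simp
  qed
  have pw: "gsteps (Cstep step le) (concat (replicate k w)) I (s k)" for k
  proof (induction k)
    case 0 then show ?case using s0 by simp
  next
    case (Suc k)
    then show ?case unfolding concat_replicate_Suc' gsteps_append using inv[of k] by blast
  qed
  have capw: "capp step le w I = Some B" using capp_eq[OF II IB] .
  have set_eq: "{J. \<exists>k. capp step le (concat (replicate k w)) I = Some J} = range s"
  proof
    show "{J. \<exists>k. capp step le (concat (replicate k w)) I = Some J} \<subseteq> range s"
    proof
      fix J assume "J \<in> {J. \<exists>k. capp step le (concat (replicate k w)) I = Some J}"
      then obtain k where "capp step le (concat (replicate k w)) I = Some J" by blast
      moreover have "capp step le (concat (replicate k w)) I = Some (s k)" using capp_eq[OF II pw] .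
      ultimately show "J \<in> range s" by (metis option.inject rangeI)
    qed
  next
    show "range s \<subseteq> {J. \<exists>k. capp step le (concat (replicate k w)) I = Some J}"
      using capp_eq[OF II pw] by blast
  qed
  have cond: "\<exists>J. capp step le w I = Some J \<and> I \<subset> J" using capw lt by blast
  have "cinf step le w I = \<Union>{J. \<exists>k. capp step le (concat (replicate k w)) I = Some J}"
    unfolding cinf_def using cond by (rule if_P)
  then have "cinf step le w I = \<Union>(range s)" using set_eq by simp
  moreover have "\<exists>f. \<Union>(range s) = \<Union>(range f) \<and> (\<forall>i. f i \<in> Idl_level le n) \<and> (\<forall>i. f i \<subset> f (Suc i))"
    using inv by (intro exI[of _ s]) simp
  ultimately show ?thesis by simp
qed

lemma cinf_Idl: "I \<in> Idl le \<Longrightarrow> cinf step le w I \<in> Idl le"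
proof -
  assume II: "I \<in> Idl le"
  show ?thesis
  proof (cases "\<exists>J. capp step le w I = Some J \<and> I \<subset> J")
    case True
    then obtain J where "capp step le w I = Some J" "I \<subset> J" by blast
    then have "cinf step le w I \<in> Idl_level le (Suc 0)"
      using K2[of I 0 w J] II capp_Some[OF II] by simp
    then show ?thesis using level_Idl by blast
  next
    case False
    have "cinf step le w I = I" unfolding cinf_def using False by (rule if_not_P)
    then show ?thesis using II by simp
  qed
qed


context
  fixes I0 :: "'x set" and N :: "'a list set" and L :: "'a list \<Rightarrow> 'x set \<times> nat"
  assumes I0: "I0 \<in> Idl le" and KT: "km_tree step le I0 N L"
begin

lemma KT_parent: "c @ [a] \<in> N \<Longrightarrow> c \<in> N"
  using KT unfolding km_tree_def by blast

lemma KT_root: "[] \<in> N"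
  using KT unfolding km_tree_def by blast

lemma KT_child_iff: "c \<in> N \<Longrightarrow> c @ [a] \<in> N \<longleftrightarrow>
   \<not> km_marked_leaf step le I0 L c \<and> capp step le [a] (fst (L c)) \<noteq> None"
  using KT unfolding km_tree_def by blast

lemma N_prefix: "prefix c d \<Longrightarrow> d \<in> N \<Longrightarrow> c \<in> N"
proof (induction d rule: rev_induct)
  case Nil then show ?case by simp
next
  case (snoc a d)
  then show ?case using KT_parent by (cases "c = d @ [a]") auto
qed

lemma KT_lab: "c \<in> N \<Longrightarrow> (if km_marked_leaf step le I0 L c then L c = km_init step le I0 L c
        else if (\<exists>c'. km_accel_cand step le I0 L c c') then
          (\<exists>c'. km_accel_cand step le I0 L c c' \<and>
             L c = (cinf step le (drop (length c') c) (fst (km_init step le I0 L c)),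
                    snd (km_init step le I0 L c) + 1))
        else L c = km_init step le I0 L c)"
  using KT unfolding km_tree_def by blast

lemma L_root: "L [] = (I0, 0)"
proof -
  have "\<not> km_marked_leaf step le I0 L []" unfolding km_marked_leaf_def by simp
  moreover have "\<not> (\<exists>c'. km_accel_cand step le I0 L [] c')" unfolding km_accel_cand_def by simp
  ultimately have "L [] = km_init step le I0 L []" using KT_lab[OF KT_root] by simp
  then show ?thesis unfolding km_init_def by simp
qed

lemma L_child:
  assumes cN: "c @ [a] \<in> N" and cI: "fst (L c) \<in> Idl le"
  shows "\<exists>I. Cstep step le a (fst (L c)) I \<and>
     (L (c @ [a]) = (I, snd (L c)) \<or>
      (\<exists>c'. km_accel_cand step le I0 L (c @ [a]) c' \<and>
         L (c @ [a]) = (cinf step le (drop (length c') (c @ [a])) I, snd (L c) + 1)))"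
proof -
  have c: "c \<in> N" using KT_parent cN by blast
  then have "capp step le [a] (fst (L c)) \<noteq> None" using KT_child_iff cN by blast
  then obtain I where capI: "capp step le [a] (fst (L c)) = Some I" by blast
  then have "gsteps (Cstep step le) [a] (fst (L c)) I" using capp_Some cI by blast
  then have CI: "Cstep step le a (fst (L c)) I" by simp
  have init: "km_init step le I0 L (c @ [a]) = (I, snd (L c))"
    unfolding km_init_def using capI by simp
  note lab = KT_lab[OF cN]
  show ?thesis
  proof (cases "km_marked_leaf step le I0 L (c @ [a])")
    case True
    then show ?thesis using lab init CI by simp
  next
    case False
    show ?thesis
    proof (cases "\<exists>c'. km_accel_cand step le I0 L (c @ [a]) c'")
      case True
      then obtain c' where "km_accel_cand step le I0 L (c @ [a]) c'"
        "L (c @ [a]) = (cinf step le (drop (length c') (c @ [a])) (fst (km_init step le I0 L (c @ [a]))),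
                    snd (km_init step le I0 L (c @ [a])) + 1)"
        using lab False by auto
      then show ?thesis using init CI by auto
    next
      case F2: False
      then show ?thesis using lab init CI False by simp
    qed
  qed
qed

lemma L_Idl: "d \<in> N \<Longrightarrow> fst (L d) \<in> Idl le"
proof (induction d rule: rev_induct)
  case Nil
  then show ?case using L_root I0 by simp
next
  case (snoc a d)
  then have dI: "fst (L d) \<in> Idl le" using KT_parent by blast
  obtain I where I: "Cstep step le a (fst (L d)) I"
     "L (d @ [a]) = (I, snd (L d)) \<or>
      (\<exists>c'. km_accel_cand step le I0 L (d @ [a]) c' \<and>
         L (d @ [a]) = (cinf step le (drop (length c') (d @ [a])) I, snd (L d) + 1))"
    using L_child[OF snoc.prems dI] by blast
  have "I \<in> Idl le" using Cstep_Idl I(1) by blast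
  then show ?case using I(2) cinf_Idl by auto
qed

lemma L_child':
  assumes cN: "c @ [a] \<in> N"
  shows "\<exists>I. Cstep step le a (fst (L c)) I \<and>
     (L (c @ [a]) = (I, snd (L c)) \<or>
      (\<exists>c'. km_accel_cand step le I0 L (c @ [a]) c' \<and>
         L (c @ [a]) = (cinf step le (drop (length c') (c @ [a])) I, snd (L c) + 1)))"
  using L_child[OF cN L_Idl[OF KT_parent[OF cN]]] .

lemma snd_child: "c @ [a] \<in> N \<Longrightarrow> snd (L c) \<le> snd (L (c @ [a]))"
  using L_child' by fastforce

lemma snd_mono: "prefix c d \<Longrightarrow> d \<in> N \<Longrightarrow> snd (L c) \<le> snd (L d)"
proof (induction d rule: rev_induct)
  case Nil
  then show ?case by simp
next
  case (snoc a d)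
  show ?case
  proof (cases "c = d @ [a]")
    case True then show ?thesis by simp
  next
    case False
    then have "prefix c d" using snoc.prems(1) by simp
    then have "snd (L c) \<le> snd (L d)" using snoc.IH KT_parent snoc.prems(2) by blast
    then show ?thesis using snd_child[OF snoc.prems(2)] by linarith
  qed
qed

lemma exact_path: "prefix x y \<Longrightarrow> y \<in> N \<Longrightarrow> snd (L x) = snd (L y) \<Longrightarrow>
   gsteps (Cstep step le) (drop (length x) y) (fst (L x)) (fst (L y))"
proof (induction y rule: rev_induct)
  case Nil
  then show ?case by simp
next
  case (snoc a d)
  show ?case
  proof (cases "x = d @ [a]")
    case True then show ?thesis by simp
  next
    case False
    then have px: "prefix x d" using snoc.prems(1) by simp
    have dN: "d \<in> N" using KT_parent snoc.prems(2) by blast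
    have "snd (L x) \<le> snd (L d)" using snd_mono[OF px dN] .
    moreover have "snd (L d) \<le> snd (L (d @ [a]))" using snd_child[OF snoc.prems(2)] .
    ultimately have eq: "snd (L d) = snd (L (d @ [a]))" "snd (L x) = snd (L d)"
      using snoc.prems(3) by linarith+
    have IH: "gsteps (Cstep step le) (drop (length x) d) (fst (L x)) (fst (L d))"
      using snoc.IH[OF px dN eq(2)] .
    obtain I where I: "Cstep step le a (fst (L d)) I"
     "L (d @ [a]) = (I, snd (L d)) \<or>
      (\<exists>c'. km_accel_cand step le I0 L (d @ [a]) c' \<and>
         L (d @ [a]) = (cinf step le (drop (length c') (d @ [a])) I, snd (L d) + 1))"
      using L_child'[OF snoc.prems(2)] by blast
    have "L (d @ [a]) = (I, snd (L d))"
    proof (rule ccontr)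
      assume "L (d @ [a]) \<noteq> (I, snd (L d))"
      then have "snd (L (d @ [a])) = snd (L d) + 1" using I(2) by force
      then show False using eq(1) by simp
    qed
    then have fI: "fst (L (d @ [a])) = I" by simp
    have len: "length x \<le> length d" using px prefix_length_le by blast
    have "drop (length x) (d @ [a]) = drop (length x) d @ [a]" using len by simp
    then show ?thesis using IH I(1) fI gsteps_append by fastforce
  qed
qed

lemma level_path: "prefix c d \<Longrightarrow> d \<in> N \<Longrightarrow> fst (L c) \<in> Idl_level le n \<Longrightarrow>
   fst (L d) \<in> Idl_level le (n + (snd (L d) - snd (L c)))"
proof (induction d rule: rev_induct)
  case Nil
  then show ?case by simp
next
  case (snoc a d)
  show ?case
  proof (cases "c = d @ [a]")
    case True then show ?thesis using snoc.prems(3) by simp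
  next
    case False
    then have pc: "prefix c d" using snoc.prems(1) by simp
    have dN: "d \<in> N" using KT_parent snoc.prems(2) by blast
    define m where "m = n + (snd (L d) - snd (L c))"
    have cd: "snd (L c) \<le> snd (L d)" using snd_mono[OF pc dN] .
    have dL: "fst (L d) \<in> Idl_level le m" using snoc.IH[OF pc dN snoc.prems(3)] unfolding m_def .
    obtain I where I: "Cstep step le a (fst (L d)) I"
     "L (d @ [a]) = (I, snd (L d)) \<or>
      (\<exists>c'. km_accel_cand step le I0 L (d @ [a]) c' \<and>
         L (d @ [a]) = (cinf step le (drop (length c') (d @ [a])) I, snd (L d) + 1))"
      using L_child'[OF snoc.prems(2)] by blast
    have IL: "I \<in> Idl_level le m" using K1[OF dL I(1)] .
    show ?thesis
    proof (cases "L (d @ [a]) = (I, snd (L d))")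
      case True
      then show ?thesis using IL unfolding m_def by simp
    next
      case False
      then obtain c' where cand: "km_accel_cand step le I0 L (d @ [a]) c'"
        and Lda: "L (d @ [a]) = (cinf step le (drop (length c') (d @ [a])) I, snd (L d) + 1)"
        using I(2) by blast
      have init: "km_init step le I0 L (d @ [a]) = (I, snd (L d))"
      proof -
        have "capp step le [a] (fst (L d)) = Some I"
          using capp_eq[OF L_Idl[OF dN]] I(1) by simp
        then show ?thesis unfolding km_init_def by simp
      qed
      have c1: "strict_prefix c' (d @ [a])" "fst (L c') \<subset> I" "snd (L c') = snd (L d)"
        using cand init unfolding km_accel_cand_def by auto
      have pc': "prefix c' d" using c1(1)
        by (metis prefix_snoc strict_prefix_def)
      have ex: "gsteps (Cstep step le) (drop (length c') d) (fst (L c')) (fst (L d))"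
        using exact_path[OF pc' dN c1(3)] .
      have len: "length c' \<le> length d" using pc' prefix_length_le by blast
      have dr: "drop (length c') (d @ [a]) = drop (length c') d @ [a]" using len by simp
      have ex2: "gsteps (Cstep step le) (drop (length c') (d @ [a])) (fst (L c')) I"
        unfolding dr gsteps_append using ex I(1) by auto
      have c'I: "fst (L c') \<in> Idl le" using L_Idl[OF N_prefix[OF pc' dN]] .
      have II: "I \<in> Idl le" using Cstep_Idl I(1) by blast
      obtain B where B: "gsteps (Cstep step le) (drop (length c') (d @ [a])) I B" "I \<subset> B"
        using gsteps_ssm[OF c'I II _ ex2] c1(2) by blast
      have "cinf step le (drop (length c') (d @ [a])) I \<in> Idl_level le (Suc m)"
        using K2[OF IL B] .
      moreover have "Suc m = n + (snd (L (d @ [a])) - snd (L c))" using Lda cd unfolding m_def by simp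
      ultimately show ?thesis using Lda by simp
    qed
  qed
qed


lemma part1:
  assumes pcd: "prefix c d" and dN: "d \<in> N" and eq: "fst (L c) = fst (L d)"
  shows "snd (L c) = snd (L d)"
proof (rule ccontr)
  assume ne: "snd (L c) \<noteq> snd (L d)"
  have cN: "c \<in> N" using N_prefix pcd dN by blast
  define k where "k = snd (L d) - snd (L c)"
  have k1: "1 \<le> k" using snd_mono[OF pcd dN] ne unfolding k_def by linarith
  have stepk: "fst (L c) \<in> Idl_level le n \<Longrightarrow> fst (L c) \<in> Idl_level le (n + k)" for n
    using level_path[OF pcd dN, of n] eq unfolding k_def by simp
  have all: "fst (L c) \<in> Idl_level le (j * k)" for j
  proof (induction j)
    case 0 then show ?case using L_Idl[OF cN] by simp
  next
    case (Suc j) then show ?case using stepk[of "j * k"] by (simp add: add.commute)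
  qed
  obtain N0 where N0: "Idl_level le N0 = {}" using V unfolding very_wsts_def by blast
  have "N0 \<le> N0 * k" using k1 by simp
  then have "fst (L c) \<in> Idl_level le N0" using level_mono all[of N0] by blast
  then show False using N0 by simp
qed

lemma part2: "(stut_edge N L)\<^sup>*\<^sup>* c d \<Longrightarrow> snd (L c) \<le> snd (L d)"
proof (induction rule: rtranclp_induct)
  case base then show ?case by simp
next
  case (step y z)
  have "snd (L y) \<le> snd (L z)"
  proof -
    have yz: "y \<in> N" "z \<in> N" "(\<exists>a. z = y @ [a]) \<or> (km_leaf N y \<and> prefix z y \<and> fst (L z) = fst (L y))"
      using step.hyps(2) unfolding stut_edge_def by auto
    show ?thesis
    proof (cases "\<exists>a. z = y @ [a]")
      case True
      then obtain a where "z = y @ [a]" by blast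
      then show ?thesis using snd_child yz(2) by blast
    next
      case False
      then have "prefix z y" "fst (L z) = fst (L y)" using yz(3) by auto
      then show ?thesis using part1 yz(1) by fastforce
    qed
  qed
  then show ?case using step.IH by linarith
qed
end

end

theorem proposition25:
  fixes step :: "'a::finite \<Rightarrow> 'x \<Rightarrow> 'x \<Rightarrow> bool"
    and le :: "'x \<Rightarrow> 'x \<Rightarrow> bool"
    and I0 :: "'x set"
    and N :: "'a list set"
    and L :: "'a list \<Rightarrow> 'x set \<times> nat"
  assumes "very_wsts step le"
    and "I0 \<in> Idl le"
    and "km_tree step le I0 N L"
    and "c \<in> N" and "d \<in> N"
  shows "(prefix c d \<and> fst (L c) = fst (L d) \<longrightarrow> snd (L c) = snd (L d))
     \<and> ((stut_edge N L)\<^sup>*\<^sup>* c d \<longrightarrow> snd (L c) \<le> snd (L d))"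
  using part1[OF assms(1,2,3) _ assms(5)] part2[OF assms(1,2,3)] by blast

end
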